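(* Let $k,l$ be positive integers and $q\in\mathbb{C}$ with $|q|<1$. Then $$\sum q^{\lambda_1+\cdots+\lambda_l+\lambda_{l+1}}=\prod_{j=1}^{l+1}\frac{1}{1-q^{jk}}\cdot\frac{1-q+q^{lk+1}-q^{k(l+1)}}{1-q},$$ where the sum is over all integer tuples $(\lambda_1,\dots,\lambda_{l+1})$ with $\lambda_1\ge\lambda_2\ge\cdots\ge\lambda_{l+1}\ge0$ and $k\mid\lambda_j$ for $1\le j\le l$. *)

theory Defs
  imports "HOL-Analysis.Analysis"
begin

end

theory Submission
  imports Defs
begin

lemma geo_has_sum:
  fixes z :: "'a::{real_normed_field,banach}"
  assumes "norm z < 1"
  shows "((\<lambda>n. z^n) has_sum (1/(1-z))) UNIV"
  by (rule norm_summable_imp_has_sum) (use assms in \<open>auto simp: norm_power intro: summable_geometric geometric_sums\<close>)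

lemma sigma_has_sum:
  fixes f :: "'x \<times> 'y \<Rightarrow> complex"
  assumes inner: "\<And>x. x\<in>A \<Longrightarrow> ((\<lambda>y. f(x,y)) has_sum g x) (B x)"
    and innern: "\<And>x. x\<in>A \<Longrightarrow> ((\<lambda>y. norm (f(x,y))) has_sum G x) (B x)"
    and outer: "(g has_sum S) A" and outern: "G summable_on A"
  shows "(f has_sum S) (Sigma A B) \<and> (\<lambda>p. norm (f p)) summable_on Sigma A B"
proof -
  have Gnn: "G x \<ge> 0" if "x \<in> A" for x
    using innern[OF that] by (rule has_sum_nonneg) auto
  have h1: "(\<lambda>x. norm (infsum (\<lambda>y. norm (f (x, y))) (B x))) summable_on A"
  proof -
    have "(\<lambda>x. norm (infsum (\<lambda>y. norm (f (x, y))) (B x))) summable_on A \<longleftrightarrow> G summable_on A"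
    proof (intro summable_on_cong)
      fix x assume "x \<in> A"
      thus "norm (infsum (\<lambda>y. norm (f (x, y))) (B x)) = G x"
        using infsumI[OF innern[OF \<open>x \<in> A\<close>]] Gnn[OF \<open>x \<in> A\<close>] by simp
    qed
    thus ?thesis using outern by (rule iffD2)
  qed
  have h2: "\<forall>x\<in>A. (\<lambda>y. norm (f (x, y))) summable_on B x"
    using innern has_sum_imp_summable by (meson ballI)
  have abs: "(\<lambda>p. norm (f p)) summable_on Sigma A B"
    using Infinite_Sum.abs_summable_on_Sigma_iff[where f=f and A=A and B=B] h1 h2 by blast
  hence "f summable_on Sigma A B" by (rule abs_summable_summable)
  hence "(f has_sum S) (Sigma A B)" using inner outer by (rule has_sum_SigmaI[rotated 2])
  with abs show ?thesis by simp
qed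

lemma base_aux:
  fixes z :: "'a::{real_normed_field,banach}"
  assumes "norm z < 1" "k > 0"
  shows "((\<lambda>a. \<Sum>r\<le>k*a. z^((c+1)*k*a + r)) has_sum
           ((1/(1-z^((c+1)*k)) - z/(1-z^((c+2)*k)))/(1-z))) UNIV"
proof -
  have z1: "z \<noteq> 1" using assms by auto
  have n1: "norm (z^((c+1)*k)) < 1" "norm (z^((c+2)*k)) < 1"
    using assms by (auto simp: norm_power power_less_one_iff)
  have eq: "(\<Sum>r\<le>k*a. z^((c+1)*k*a + r)) = ((z^((c+1)*k))^a - z * (z^((c+2)*k))^a)/(1-z)" for a
  proof -
    have "(\<Sum>r\<le>k*a. z^((c+1)*k*a + r)) = z^((c+1)*k*a) * (\<Sum>r<k*a+1. z^r)"
      by (simp add: sum_distrib_left power_add lessThan_Suc_atMost)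
    also have "\<dots> = z^((c+1)*k*a) * ((1 - z^(k*a+1))/(1-z))"
      using z1 by (simp add: sum_gp_strict field_simps)
    also have "\<dots> = ((z^((c+1)*k))^a - z * (z^((c+2)*k))^a)/(1-z)"
      by (simp add: field_simps power_add power_mult[symmetric] algebra_simps) 
    finally show ?thesis .
  qed
  have "((\<lambda>a. ((z^((c+1)*k))^a - z * (z^((c+2)*k))^a)/(1-z)) has_sum
           ((1/(1-z^((c+1)*k)) - z/(1-z^((c+2)*k)))/(1-z))) UNIV"
    apply (rule has_sum_divide_const)
    using has_sum_add[OF geo_has_sum[OF n1(1)] has_sum_cmult_right[OF geo_has_sum[OF n1(2)], of "-z"]]
    by (simp add: algebra_simps)
  thus ?thesis unfolding eq .
qed

definition Tset :: "nat \<Rightarrow> nat \<Rightarrow> nat list set" where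
  "Tset k n = {xs. length xs = n+1 \<and> sorted_wrt (\<ge>) xs \<and> (\<forall>j<n. k dvd xs!j)}"

definition wt :: "nat \<Rightarrow> nat list \<Rightarrow> nat" where
  "wt c xs = sum_list xs + c * hd xs"

definition Vv :: "complex \<Rightarrow> nat \<Rightarrow> nat \<Rightarrow> nat \<Rightarrow> complex" where
  "Vv q k n c = (\<Prod>j=c+1..c+n-1. 1/(1-q^(j*k))) * ((1/(1-q^((c+n)*k)) - q/(1-q^((c+n+1)*k)))/(1-q))"

lemma all_less_Suc_split: "(\<forall>j<Suc n. P j) \<longleftrightarrow> P 0 \<and> (\<forall>j<n. P (Suc j))"
  by (auto simp: less_Suc_eq_0_disj)

lemma Tset_hd:
  assumes "ys \<in> Tset k n" "n \<ge> 1"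
  shows "ys \<noteq> [] \<and> k dvd hd ys"
proof -
  have "ys \<noteq> []" using assms by (auto simp: Tset_def)
  moreover have "k dvd ys!0" using assms by (auto simp: Tset_def)
  ultimately show ?thesis by (simp add: hd_conv_nth)
qed

lemma Tset_Cons:
  assumes "n \<ge> 1"
  shows "(x # ys) \<in> Tset k (n+1) \<longleftrightarrow> ys \<in> Tset k n \<and> hd ys \<le> x \<and> k dvd x"
proof (cases ys)
  case Nil
  then show ?thesis using assms by (auto simp: Tset_def)
next
  case (Cons y zs)
  have "(\<forall>j<n+1. k dvd (x#ys)!j) \<longleftrightarrow> k dvd x \<and> (\<forall>j<n. k dvd ys!j)"
    by (simp add: all_less_Suc_split)
  moreover have "sorted_wrt (\<ge>) (x#ys) \<longleftrightarrow> sorted_wrt (\<ge>) ys \<and> hd ys \<le> x"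
    using Cons by auto
  ultimately show ?thesis by (auto simp: Tset_def)
qed

lemma base_case:
  assumes "k > 0" "norm q < 1"
  shows "((\<lambda>xs. q ^ wt c xs) has_sum Vv q k 1 c) (Tset k 1) \<and>
         (\<lambda>xs. norm (q ^ wt c xs)) summable_on (Tset k 1)"
proof -
  define f where "f = (\<lambda>(a::nat,r::nat). q^((c+1)*k*a + r))"
  have nq: "norm (norm q) < 1" using assms by simp
  have S: "(f has_sum ((1/(1-q^((c+1)*k)) - q/(1-q^((c+2)*k)))/(1-q))) (Sigma UNIV (\<lambda>a. {..k*a}))
     \<and> (\<lambda>p. norm (f p)) summable_on (Sigma UNIV (\<lambda>a. {..k*a}))"
  proof (rule sigma_has_sum)
    fix a :: nat
    show "((\<lambda>r. f (a, r)) has_sum (\<Sum>r\<le>k*a. q^((c+1)*k*a + r))) {..k*a}"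
      unfolding f_def by (simp add: has_sum_finite)
    show "((\<lambda>r. norm (f (a, r))) has_sum (\<Sum>r\<le>k*a. norm q^((c+1)*k*a + r))) {..k*a}"
      unfolding f_def by (simp add: has_sum_finite norm_power)
  next
    show "((\<lambda>a. \<Sum>r\<le>k*a. q^((c+1)*k*a + r)) has_sum ((1/(1-q^((c+1)*k)) - q/(1-q^((c+2)*k)))/(1-q))) UNIV"
      by (rule base_aux) (use assms in auto)
    show "(\<lambda>a. \<Sum>r\<le>k*a. norm q^((c+1)*k*a + r)) summable_on UNIV"
      using base_aux[OF nq assms(1), of c] has_sum_imp_summable by blast
  qed
  have T1: "xs \<in> Tset k (Suc 0) \<longleftrightarrow> (\<exists>x0 x1. xs = [x0, x1] \<and> k dvd x0 \<and> x1 \<le> x0)" for xs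
    by (auto simp: Tset_def numeral_2_eq_2 length_Suc_conv)
  have "((\<lambda>xs. q ^ wt c xs) has_sum Vv q k 1 c) (Tset k 1) =
        (f has_sum ((1/(1-q^((c+1)*k)) - q/(1-q^((c+2)*k)))/(1-q))) (Sigma UNIV (\<lambda>a. {..k*a}))"
    apply (rule has_sum_reindex_bij_witness[where i="\<lambda>(a,r). [k*a, r]" and j="\<lambda>xs. (xs!0 div k, xs!1)"])
    using assms(1) apply (auto simp: T1 f_def wt_def Vv_def algebra_simps elim!: dvdE)
    done
  moreover have "((\<lambda>xs. norm (q ^ wt c xs)) summable_on (Tset k 1)) =
        ((\<lambda>p. norm (f p)) summable_on (Sigma UNIV (\<lambda>a. {..k*a})))"
    apply (rule summable_on_reindex_bij_witness[where i="\<lambda>(a,r). [k*a, r]" and j="\<lambda>xs. (xs!0 div k, xs!1)"])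
    using assms(1) apply (auto simp: T1 f_def wt_def algebra_simps elim!: dvdE)
    done
  ultimately show ?thesis using S by simp
qed

lemma V: assumes "n \<ge> 1" shows "Vv q k n (c+1) * (1/(1-q^((c+1)*k))) = Vv q k (n+1) c"
  proof -
    have P: "(\<Prod>j=c+1..c+(n+1)-1. 1/(1-q^(j*k))) = 1/(1-q^((c+1)*k)) * (\<Prod>j=c+1+1..c+1+n-1. 1/(1-q^(j*k)))"
      using assms by (simp add: prod.atLeast_Suc_atMost)
    have e1: "c + (n+1) = c+1+n" "c+(n+1)+1 = c+1+n+1" by simp_all
    show ?thesis unfolding Vv_def P unfolding e1 by (simp only: mult_ac)
  qed

lemma step_case:
  assumes "k > 0" "norm q < 1" "n \<ge> 1"
    and IH: "\<And>c. ((\<lambda>xs. q ^ wt c xs) has_sum Vv q k n c) (Tset k n) \<and>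
         (\<lambda>xs. norm (q ^ wt c xs)) summable_on (Tset k n)"
  shows "((\<lambda>xs. q ^ wt c xs) has_sum Vv q k (n+1) c) (Tset k (n+1)) \<and>
         (\<lambda>xs. norm (q ^ wt c xs)) summable_on (Tset k (n+1))"
proof -
  define f where "f = (\<lambda>(ys, t::nat). q ^ wt (c+1) ys * (q^((c+1)*k))^t)"
  have n1: "norm (q^((c+1)*k)) < 1" "norm (norm q^((c+1)*k)) < 1"
    using assms by (auto simp: norm_power power_less_one_iff)
  have S: "(f has_sum (Vv q k n (c+1) * (1/(1-q^((c+1)*k))))) (Sigma (Tset k n) (\<lambda>_. UNIV))
     \<and> (\<lambda>p. norm (f p)) summable_on (Sigma (Tset k n) (\<lambda>_. UNIV))"
  proof (rule sigma_has_sum)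
    fix ys
    show "((\<lambda>t. f (ys, t)) has_sum (q ^ wt (c+1) ys * (1/(1-q^((c+1)*k))))) UNIV"
      unfolding f_def using has_sum_cmult_right[OF geo_has_sum[OF n1(1)]] by simp
    show "((\<lambda>t. norm (f (ys, t))) has_sum (norm (q ^ wt (c+1) ys) * (1/(1-norm q^((c+1)*k))))) UNIV"
      unfolding f_def using has_sum_cmult_right[OF geo_has_sum[OF n1(2)]] by (simp add: norm_mult norm_power)
  next
    show "((\<lambda>ys. q ^ wt (c+1) ys * (1/(1-q^((c+1)*k)))) has_sum (Vv q k n (c+1) * (1/(1-q^((c+1)*k))))) (Tset k n)"
      using IH[of "c+1"] has_sum_cmult_left by blast
    show "(\<lambda>ys. norm (q ^ wt (c+1) ys) * (1/(1-norm q^((c+1)*k)))) summable_on (Tset k n)"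
      using IH[of "c+1"] summable_on_cmult_left by blast
  qed
  have V: "Vv q k n (c+1) * (1/(1-q^((c+1)*k))) = Vv q k (n+1) c"
    using V[OF assms(3)] .
  have TC: "xs \<in> Tset k (n+1) \<longleftrightarrow> (\<exists>x ys. xs = x # ys \<and> ys \<in> Tset k n \<and> hd ys \<le> x \<and> k dvd x)" for xs
    using Tset_Cons[OF assms(3)] by (cases xs) (auto simp: Tset_def)
  have key: "hd ys + k * ((x - hd ys) div k) = x" if "ys \<in> Tset k n" "hd ys \<le> x" "k dvd x" for ys x
  proof -
    have "k dvd hd ys" using Tset_hd[OF that(1) assms(3)] by simp
    hence "k dvd (x - hd ys)" using that(3) by (simp add: dvd_diff_nat)
    thus ?thesis using that(2) by simp
  qed
  have key2: "((hd ys + k * t) - hd ys) div k = t" for ys t using assms(1) by simp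
  define ii where "ii = (\<lambda>(ys,t). (hd ys + k*t) # ys)"
  define jj where "jj = (\<lambda>xs. (tl xs, (hd xs - hd (tl xs)) div k))"
  have w1: "ii (jj xs) = xs" and w2: "jj xs \<in> Sigma (Tset k n) (\<lambda>_. UNIV)"
    and w5: "f (jj xs) = q ^ wt c xs" if xsT: "xs \<in> Tset k (n+1)" for xs
  proof -
    obtain x ys where xs: "xs = x # ys" "ys \<in> Tset k n" "hd ys \<le> x" "k dvd x"
      using xsT unfolding TC by blast
    show "ii (jj xs) = xs"
      using key[OF xs(2-4)] xs(1) by (simp add: ii_def jj_def)
    show "jj xs \<in> Sigma (Tset k n) (\<lambda>_. UNIV)"
      using xs by (simp add: jj_def)
    have e: "wt c xs = wt (c+1) ys + (c+1)*k*((x - hd ys) div k)"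
    proof -
      define m where "m = (x - hd ys) div k"
      have hx: "x = hd ys + k*m" using key[OF xs(2-4)] unfolding m_def by simp
      have "wt c xs = wt (c+1) ys + (c+1)*k*m" unfolding wt_def xs(1) hx by (simp add: algebra_simps)
      thus ?thesis unfolding m_def .
    qed
    show "f (jj xs) = q ^ wt c xs"
      unfolding f_def e using xs(1) by (simp add: power_add power_mult jj_def)
  qed
  have w3: "jj (ii p) = p" and w4: "ii p \<in> Tset k (n+1)" if p: "p \<in> Sigma (Tset k n) (\<lambda>_. UNIV)" for p
  proof -
    obtain ys t where pp: "p = (ys, t)" "ys \<in> Tset k n" using p by auto
    show "jj (ii p) = p"
      using assms(1) pp by (simp add: ii_def jj_def)
    show "ii p \<in> Tset k (n+1)"
      using Tset_Cons[OF assms(3)] Tset_hd[OF pp(2) assms(3)] pp by (simp add: ii_def)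
  qed
  have hs: "((\<lambda>xs. q ^ wt c xs) has_sum Vv q k (n+1) c) (Tset k (n+1)) =
        (f has_sum (Vv q k n (c+1) * (1/(1-q^((c+1)*k))))) (Sigma (Tset k n) (\<lambda>_. UNIV))"
    by (rule has_sum_reindex_bij_witness[where i=ii and j=jj]) (use w1 w2 w3 w4 w5 V in auto)
  have sm: "((\<lambda>xs. norm (q ^ wt c xs)) summable_on (Tset k (n+1))) =
        ((\<lambda>p. norm (f p)) summable_on (Sigma (Tset k n) (\<lambda>_. UNIV)))"
    by (rule summable_on_reindex_bij_witness[where i=ii and j=jj]) (use w1 w2 w3 w4 w5 in auto)
  show ?thesis using hs sm S by simp
qed

lemma main_ind:
  assumes "k > 0" "norm q < 1" "n \<ge> 1"
  shows "((\<lambda>xs. q ^ wt c xs) has_sum Vv q k n c) (Tset k n) \<and>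
         (\<lambda>xs. norm (q ^ wt c xs)) summable_on (Tset k n)"
  using assms(3)
proof (induction n arbitrary: c rule: nat_induct_at_least)
  case base
  then show ?case using base_case[OF assms(1,2)] by simp
next
  case (Suc n)
  then show ?case using step_case[OF assms(1,2) Suc(1)] Suc(2) by simp
qed

lemma final_alg:
  fixes q :: complex
  assumes "k > 0" "l > 0" "norm q < 1"
  shows "Vv q k l 0 = (\<Prod>j=1..l+1. 1 / (1 - q ^ (j*k))) *
            ((1 - q + q ^ (l*k+1) - q ^ (k*(l+1))) / (1 - q))"
proof -
  obtain m where l: "l = Suc m" using assms(2) by (cases l) auto
  define A where "A = q^(l*k)"
  define B where "B = q^((l+1)*k)"
  have nA: "1 - A \<noteq> 0" "1 - B \<noteq> 0" "1 - q \<noteq> 0"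
  proof -
    have "norm A < 1" "norm B < 1" unfolding A_def B_def
      using assms by (auto simp: norm_power power_less_one_iff)
    thus "1 - A \<noteq> 0" "1 - B \<noteq> 0" "1 - q \<noteq> 0" using assms(3) by auto
  qed
  have P: "(\<Prod>j=1..l+1. 1 / (1 - q ^ (j*k))) = (\<Prod>j=1..l-1. 1 / (1 - q ^ (j*k))) * (1/(1-A)) * (1/(1-B))"
    unfolding A_def B_def l by (simp add: prod.cl_ivl_Suc)
  have e: "q ^ (l*k+1) = q * A" "q ^ (k*(l+1)) = B" unfolding A_def B_def by (simp_all add: mult.commute)
  have "Vv q k l 0 = (\<Prod>j=1..l-1. 1 / (1 - q ^ (j*k))) * ((1/(1-A) - q/(1-B))/(1-q))"
    unfolding Vv_def A_def B_def by simp
  also have "(1/(1-A) - q/(1-B))/(1-q) = (1/(1-A)) * (1/(1-B)) * ((1 - q + q * A - B)/(1-q))"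
    using nA by (simp add: field_simps) 
  finally show ?thesis unfolding P e by (simp add: mult_ac)
qed

theorem lemma11:
  fixes k l :: nat and q :: complex
  assumes "k > 0" and "l > 0" and "norm q < 1"
  shows "((\<lambda>xs. q ^ sum_list xs) has_sum
           ((\<Prod>j=1..l+1. 1 / (1 - q ^ (j*k))) *
            ((1 - q + q ^ (l*k+1) - q ^ (k*(l+1))) / (1 - q))))
         {xs :: nat list. length xs = l + 1 \<and> sorted_wrt (\<ge>) xs \<and>
                          (\<forall>j<l. k dvd xs ! j)}"
proof -
  have "((\<lambda>xs. q ^ wt 0 xs) has_sum Vv q k l 0) (Tset k l)"
    using main_ind[OF assms(1,3), of l 0] assms(2) by simp
  thus ?thesis unfolding final_alg[OF assms] by (simp add: wt_def Tset_def)
qed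

end
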